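(* Let $p$ be a random joint choice rule on a finite set $X$, with Möbius inverse $q$. A distribution $\nu\in\Delta(\mathcal{L}(X))$ and a transition function $t$ are a consumption dependent random utility representation of $p$, i.e. $$p(x,y,A,B)=\sum_{\succ\in N(x,A)}\sum_{\succ'\in N(y,B)}\nu(\succ)\,t_{\succ'}(x,\succ)\quad\text{for all } A,B\in\mathcal{X},\ (x,y)\in A\times B,$$ if and only if for all $A,B\in\mathcal{X}$ and all $(x,y)\in A\times B$, $$q(x,y,A,B)=\sum_{\succ\in I(x,A)}\sum_{\succ'\in I(y,B)}\nu(\succ)\,t_{\succ'}(x,\succ).$$
   Context: $X$ is finite, $\mathcal{X}$ the nonempty subsets of $X$, $\mathcal{L}(X)$ the linear orders on $X$. $N(x,A)=\{\succ: x\succ y\ \forall y\in A\setminus\{x\}\}$ and $I(x,A)=\{\succ : z\succ x\ \forall z\in X\setminus A,\ x\succ y\ \forall y\in A\setminus\{x\}\}$. A transition function is any map $t:X\times\mathcal{L}(X)\to\Delta(\mathcal{L}(X))$, with $t_{\succ'}(x,\succ)$ the probability of $\succ'$ under $t(x,\succ)$. A random joint choice rule assigns to each $A,B\in\mathcal{X}$ and $(x,y)\in A\times B$ a number $p(x,y,A,B)\ge 0$ with $\sum_{x\in A}\sum_{y\in B}p(x,y,A,B)=1$. Its Möbius inverse $q$ is the unique function with $p(x,y,A,B)=\sum_{A\subseteq A'\subseteq X}\sum_{B\subseteq B'\subseteq X}q(x,y,A',B')$ for all such $(x,y,A,B)$. *)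

theory Defs
  imports Main "HOL.Real"
begin

text \<open>The ground set X is the (finite) universe of the type 'a. A linear order on X is
  represented as a strict total order, i.e. a relation R with (x,y) in R meaning x is
  ranked above y.\<close>

definition lin_orders :: "('a \<times> 'a) set set" where
  "lin_orders = {R. irrefl R \<and> trans R \<and> (\<forall>x y. x \<noteq> y \<longrightarrow> (x, y) \<in> R \<or> (y, x) \<in> R)}"

definition N_set :: "'a \<Rightarrow> 'a set \<Rightarrow> ('a \<times> 'a) set set" where
  "N_set x A = {R \<in> lin_orders. \<forall>y \<in> A - {x}. (x, y) \<in> R}"

definition I_set :: "'a \<Rightarrow> 'a set \<Rightarrow> ('a \<times> 'a) set set" where
  "I_set x A = {R \<in> lin_orders. (\<forall>z \<in> - A. (z, x) \<in> R) \<and> (\<forall>y \<in> A - {x}. (x, y) \<in> R)}"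

definition is_distribution :: "(('a \<times> 'a) set \<Rightarrow> real) \<Rightarrow> bool" where
  "is_distribution \<nu> \<longleftrightarrow> (\<forall>R \<in> lin_orders. \<nu> R \<ge> 0) \<and> (\<Sum>R \<in> lin_orders. \<nu> R) = 1"

text \<open>t x R R' is the probability of R' under t(x,R).\<close>
definition is_transition :: "('a \<Rightarrow> ('a \<times> 'a) set \<Rightarrow> ('a \<times> 'a) set \<Rightarrow> real) \<Rightarrow> bool" where
  "is_transition t \<longleftrightarrow> (\<forall>x R. R \<in> lin_orders \<longrightarrow> is_distribution (t x R))"

definition is_rjcr :: "('a \<Rightarrow> 'a \<Rightarrow> 'a set \<Rightarrow> 'a set \<Rightarrow> real) \<Rightarrow> bool" where
  "is_rjcr p \<longleftrightarrow> (\<forall>A B. A \<noteq> {} \<longrightarrow> B \<noteq> {} \<longrightarrow>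
      (\<forall>x \<in> A. \<forall>y \<in> B. p x y A B \<ge> 0) \<and> (\<Sum>x \<in> A. \<Sum>y \<in> B. p x y A B) = 1)"

definition is_moebius_inverse ::
    "('a \<Rightarrow> 'a \<Rightarrow> 'a set \<Rightarrow> 'a set \<Rightarrow> real) \<Rightarrow> ('a \<Rightarrow> 'a \<Rightarrow> 'a set \<Rightarrow> 'a set \<Rightarrow> real) \<Rightarrow> bool" where
  "is_moebius_inverse q p \<longleftrightarrow> (\<forall>A B x y. A \<noteq> {} \<longrightarrow> B \<noteq> {} \<longrightarrow> x \<in> A \<longrightarrow> y \<in> B \<longrightarrow>
      p x y A B = (\<Sum>A' \<in> {A'. A \<subseteq> A'}. \<Sum>B' \<in> {B'. B \<subseteq> B'}. q x y A' B'))"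

end

theory Submission
  imports Defs
begin

lemma I_char: "R \<in> I_set x A' \<longleftrightarrow> R \<in> lin_orders \<and> A' = insert x {z. (x,z) \<in> R}"
proof
  assume h: "R \<in> I_set x A'"
  hence L: "R \<in> lin_orders" and o: "\<forall>z \<in> - A'. (z, x) \<in> R" and i: "\<forall>y \<in> A' - {x}. (x, y) \<in> R"
    by (auto simp: I_set_def)
  from L have irr: "\<And>a. (a,a) \<notin> R" and tr: "trans R" by (auto simp: lin_orders_def irrefl_def)
  have "x \<in> A'" using o irr by blast
  moreover have "z \<in> A'" if "(x,z) \<in> R" for z
  proof (rule ccontr)
    assume "z \<notin> A'" then have "(z,x) \<in> R" using o by blast
    with that tr irr show False by (meson transD)
  qed
  ultimately show "R \<in> lin_orders \<and> A' = insert x {z. (x,z) \<in> R}" using L i by blast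
next
  assume h: "R \<in> lin_orders \<and> A' = insert x {z. (x,z) \<in> R}"
  then have tot: "\<And>a b. a \<noteq> b \<Longrightarrow> (a,b) \<in> R \<or> (b,a) \<in> R" by (auto simp: lin_orders_def)
  show "R \<in> I_set x A'" unfolding I_set_def using h tot by auto
qed

lemma N_decomp: "x \<in> A \<Longrightarrow> N_set x A = (\<Union>A'\<in>{A'. A \<subseteq> A'}. I_set x A')"
proof (intro set_eqI iffI)
  fix R assume xA: "x \<in> A" and R: "R \<in> N_set x A"
  let ?C = "insert x {z. (x,z) \<in> R}"
  have L: "R \<in> lin_orders" and b: "\<forall>y \<in> A - {x}. (x, y) \<in> R" using R by (simp_all add: N_set_def)
  have "R \<in> I_set x ?C" using L by (simp only: I_char)
  moreover have "A \<subseteq> ?C" using b by blast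
  ultimately show "R \<in> (\<Union>A'\<in>{A'. A \<subseteq> A'}. I_set x A')" by blast
next
  fix R assume xA: "x \<in> A" and "R \<in> (\<Union>A'\<in>{A'. A \<subseteq> A'}. I_set x A')"
  then obtain A' where "A \<subseteq> A'" and "R \<in> I_set x A'" by blast
  then have "A \<subseteq> A'" "R \<in> lin_orders" "A' = insert x {z. (x,z) \<in> R}"
    by (simp_all only: I_char)
  then show "R \<in> N_set x A" unfolding N_set_def by blast
qed

lemma sum_N:
  fixes h :: "('a::finite \<times> 'a) set \<Rightarrow> real"
  assumes "x \<in> A"
  shows "(\<Sum>R\<in>N_set x A. h R) = (\<Sum>A'\<in>{A'. A \<subseteq> A'}. \<Sum>R\<in>I_set x A'. h R)"
  unfolding N_decomp[OF assms]
  by (rule sum.UNION_disjoint) (auto simp: I_char)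

lemma key:
  fixes F :: "('a::finite \<times> 'a) set \<Rightarrow> ('a \<times> 'a) set \<Rightarrow> real"
  assumes "x \<in> A" "y \<in> B"
  shows "(\<Sum>R\<in>N_set x A. \<Sum>R'\<in>N_set y B. F R R') =
    (\<Sum>A'\<in>{A'. A \<subseteq> A'}. \<Sum>B'\<in>{B'. B \<subseteq> B'}. \<Sum>R\<in>I_set x A'. \<Sum>R'\<in>I_set y B'. F R R')"
proof -
  have "(\<Sum>R\<in>N_set x A. \<Sum>R'\<in>N_set y B. F R R') =
      (\<Sum>R\<in>N_set x A. \<Sum>B'\<in>{B'. B \<subseteq> B'}. \<Sum>R'\<in>I_set y B'. F R R')"
    using sum_N[OF assms(2)] by simp
  also have "\<dots> = (\<Sum>A'\<in>{A'. A \<subseteq> A'}. \<Sum>R\<in>I_set x A'. \<Sum>B'\<in>{B'. B \<subseteq> B'}. \<Sum>R'\<in>I_set y B'. F R R')"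
    by (rule sum_N[OF assms(1)])
  also have "\<dots> = (\<Sum>A'\<in>{A'. A \<subseteq> A'}. \<Sum>B'\<in>{B'. B \<subseteq> B'}. \<Sum>R\<in>I_set x A'. \<Sum>R'\<in>I_set y B'. F R R')"
    by (rule sum.cong[OF refl], rule sum.swap)
  finally show ?thesis .
qed

lemma moeb_unique:
  fixes g :: "'a::finite set \<Rightarrow> 'a set \<Rightarrow> real"
  assumes H: "\<And>A B. x \<in> A \<Longrightarrow> y \<in> B \<Longrightarrow> (\<Sum>A'\<in>{A'. A \<subseteq> A'}. \<Sum>B'\<in>{B'. B \<subseteq> B'}. g A' B') = 0"
  shows "x \<in> A \<Longrightarrow> y \<in> B \<Longrightarrow> g A B = 0"
proof -
  have "\<forall>A B. card (- A) + card (- B) = n \<longrightarrow> x \<in> A \<longrightarrow> y \<in> B \<longrightarrow> g A B = 0" for n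
  proof (induction n rule: less_induct)
    case (less n)
    show ?case
    proof (intro allI impI)
      fix A B assume c: "card (- A) + card (- B) = n" and xA: "x \<in> A" and yB: "y \<in> B"
      let ?S = "{A'. A \<subseteq> A'} \<times> {B'. B \<subseteq> B'}"
      have z: "g A' B' = 0" if "(A', B') \<in> ?S - {(A,B)}" for A' B'
      proof -
        from that have s: "A \<subseteq> A'" "B \<subseteq> B'" "A \<noteq> A' \<or> B \<noteq> B'" by auto
        have "card (- A') \<le> card (- A)" "card (- B') \<le> card (- B)"
          using s by (auto intro!: card_mono)
        moreover have "card (- A') < card (- A) \<or> card (- B') < card (- B)"
        proof (cases "A = A'")
          case True
          then have "B \<noteq> B'" using s by blast
          then have "- B' \<subset> - B" using s by auto
          then show ?thesis by (intro disjI2 psubset_card_mono) auto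
        next
          case False
          then have "- A' \<subset> - A" using s by auto
          then show ?thesis by (intro disjI1 psubset_card_mono) auto
        qed
        ultimately have "card (- A') + card (- B') < n" using c by linarith
        with less.IH s xA yB show ?thesis by blast
      qed
      have "0 = (\<Sum>(A',B')\<in>?S. g A' B')" using H[OF xA yB] by (simp add: sum.cartesian_product)
      also have "\<dots> = g A B + (\<Sum>(A',B')\<in>?S - {(A,B)}. g A' B')"
        by (subst sum.remove[of _ "(A,B)"]) auto
      also have "(\<Sum>(A',B')\<in>?S - {(A,B)}. g A' B') = 0"
        by (rule sum.neutral) (use z in auto)
      finally show "g A B = 0" by simp
    qed
  qed
  thus "x \<in> A \<Longrightarrow> y \<in> B \<Longrightarrow> g A B = 0" by blast
qed

theorem theorem4:
  fixes p q :: "'a::finite \<Rightarrow> 'a \<Rightarrow> 'a set \<Rightarrow> 'a set \<Rightarrow> real"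
    and \<nu> :: "('a \<times> 'a) set \<Rightarrow> real"
    and t :: "'a \<Rightarrow> ('a \<times> 'a) set \<Rightarrow> ('a \<times> 'a) set \<Rightarrow> real"
  assumes "is_rjcr p"
    and "is_moebius_inverse q p"
    and "is_distribution \<nu>"
    and "is_transition t"
  shows "(\<forall>A B x y. A \<noteq> {} \<longrightarrow> B \<noteq> {} \<longrightarrow> x \<in> A \<longrightarrow> y \<in> B \<longrightarrow>
            p x y A B = (\<Sum>R \<in> N_set x A. \<Sum>R' \<in> N_set y B. \<nu> R * t x R R'))
     \<longleftrightarrow> (\<forall>A B x y. A \<noteq> {} \<longrightarrow> B \<noteq> {} \<longrightarrow> x \<in> A \<longrightarrow> y \<in> B \<longrightarrow>
            q x y A B = (\<Sum>R \<in> I_set x A. \<Sum>R' \<in> I_set y B. \<nu> R * t x R R'))"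
proof
  assume P: "\<forall>A B x y. A \<noteq> {} \<longrightarrow> B \<noteq> {} \<longrightarrow> x \<in> A \<longrightarrow> y \<in> B \<longrightarrow>
            p x y A B = (\<Sum>R \<in> N_set x A. \<Sum>R' \<in> N_set y B. \<nu> R * t x R R')"
  show "\<forall>A B x y. A \<noteq> {} \<longrightarrow> B \<noteq> {} \<longrightarrow> x \<in> A \<longrightarrow> y \<in> B \<longrightarrow>
            q x y A B = (\<Sum>R \<in> I_set x A. \<Sum>R' \<in> I_set y B. \<nu> R * t x R R')"
  proof (intro allI impI)
    fix A B :: "'a set" and x y :: 'a assume ne: "A \<noteq> {}" "B \<noteq> {}" and xA: "x \<in> A" and yB: "y \<in> B"
    let ?g = "\<lambda>A B. q x y A B - (\<Sum>R \<in> I_set x A. \<Sum>R' \<in> I_set y B. \<nu> R * t x R R')"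
    have "?g A B = 0"
    proof (rule moeb_unique[OF _ xA yB])
      fix A B :: "'a set" assume xA: "x \<in> A" and yB: "y \<in> B"
      have neA: "A \<noteq> {}" "B \<noteq> {}" using xA yB by blast+
      have "(\<Sum>A'\<in>{A'. A \<subseteq> A'}. \<Sum>B'\<in>{B'. B \<subseteq> B'}. ?g A' B') =
         (\<Sum>A'\<in>{A'. A \<subseteq> A'}. \<Sum>B'\<in>{B'. B \<subseteq> B'}. q x y A' B') -
         (\<Sum>A'\<in>{A'. A \<subseteq> A'}. \<Sum>B'\<in>{B'. B \<subseteq> B'}. \<Sum>R \<in> I_set x A'. \<Sum>R' \<in> I_set y B'. \<nu> R * t x R R')"
        by (simp add: sum_subtractf)
      also have "\<dots> = p x y A B - (\<Sum>R \<in> N_set x A. \<Sum>R' \<in> N_set y B. \<nu> R * t x R R')"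
        using assms(2)[unfolded is_moebius_inverse_def, rule_format, of A B x y] xA yB
        unfolding key[OF xA yB] using neA by simp
      also have "\<dots> = 0" using P[rule_format, OF neA xA yB] by simp
      finally show "(\<Sum>A'\<in>{A'. A \<subseteq> A'}. \<Sum>B'\<in>{B'. B \<subseteq> B'}. ?g A' B') = 0" .
    qed
    thus "q x y A B = (\<Sum>R \<in> I_set x A. \<Sum>R' \<in> I_set y B. \<nu> R * t x R R')" by simp
  qed
next
  assume Q: "\<forall>A B x y. A \<noteq> {} \<longrightarrow> B \<noteq> {} \<longrightarrow> x \<in> A \<longrightarrow> y \<in> B \<longrightarrow>
            q x y A B = (\<Sum>R \<in> I_set x A. \<Sum>R' \<in> I_set y B. \<nu> R * t x R R')"
  show "\<forall>A B x y. A \<noteq> {} \<longrightarrow> B \<noteq> {} \<longrightarrow> x \<in> A \<longrightarrow> y \<in> B \<longrightarrow>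
            p x y A B = (\<Sum>R \<in> N_set x A. \<Sum>R' \<in> N_set y B. \<nu> R * t x R R')"
  proof (intro allI impI)
    fix A B :: "'a set" and x y :: 'a assume ne: "A \<noteq> {}" "B \<noteq> {}" and xA: "x \<in> A" and yB: "y \<in> B"
    have "p x y A B = (\<Sum>A'\<in>{A'. A \<subseteq> A'}. \<Sum>B'\<in>{B'. B \<subseteq> B'}. q x y A' B')"
      using assms(2) ne xA yB unfolding is_moebius_inverse_def by blast
    also have "\<dots> = (\<Sum>A'\<in>{A'. A \<subseteq> A'}. \<Sum>B'\<in>{B'. B \<subseteq> B'}. \<Sum>R \<in> I_set x A'. \<Sum>R' \<in> I_set y B'. \<nu> R * t x R R')"
    proof (intro sum.cong refl)
      fix A' B' assume "A' \<in> {A'. A \<subseteq> A'}" "B' \<in> {B'. B \<subseteq> B'}"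
      then have "x \<in> A'" "y \<in> B'" using xA yB by auto
      moreover then have "A' \<noteq> {}" "B' \<noteq> {}" by blast+
      ultimately show "q x y A' B' = (\<Sum>R \<in> I_set x A'. \<Sum>R' \<in> I_set y B'. \<nu> R * t x R R')"
        using Q[rule_format, of A' B' x y] by blast
    qed
    also have "\<dots> = (\<Sum>R \<in> N_set x A. \<Sum>R' \<in> N_set y B. \<nu> R * t x R R')"
      by (rule key[OF xA yB, symmetric])
    finally show "p x y A B = (\<Sum>R \<in> N_set x A. \<Sum>R' \<in> N_set y B. \<nu> R * t x R R')" .
  qed
qed

end
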